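(* Let $D$ be a division ring, $R$ a maximal subring of $D$, and $\lambda\in D$. Then $\lambda R\subseteq R\lambda$ if and only if $R\lambda\subseteq \lambda R$ if and only if $\lambda R=R\lambda$.
   Context: All rings are associative unital and subrings share the identity. A maximal subring of a ring $T$ is a proper subring maximal under inclusion among proper subrings of $T$. *)

theory Defs
  imports Main
begin

definition is_subring :: "'a::ring_1 set \<Rightarrow> bool" where
  "is_subring S \<longleftrightarrow> 0 \<in> S \<and> 1 \<in> S \<and>
     (\<forall>x\<in>S. \<forall>y\<in>S. x + y \<in> S \<and> x * y \<in> S) \<and> (\<forall>x\<in>S. - x \<in> S)"

definition maximal_subring :: "'a::ring_1 set \<Rightarrow> bool" where
  "maximal_subring R \<longleftrightarrow> is_subring R \<and> R \<noteq> UNIV \<and>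
     (\<forall>S. is_subring S \<and> S \<noteq> UNIV \<and> R \<subseteq> S \<longrightarrow> S = R)"

end

theory Submission
  imports Defs
begin

lemma conj_subring:
  fixes R :: "'a::division_ring set" and c :: 'a
  assumes c: "c \<noteq> 0" and R: "is_subring R"
  shows "is_subring ((\<lambda>r. c * r * inverse c) ` R)"
proof -
  have 0: "0 \<in> (\<lambda>r. c * r * inverse c) ` R"
    using R by (auto simp: is_subring_def intro!: image_eqI[where x=0])
  have 1: "1 \<in> (\<lambda>r. c * r * inverse c) ` R"
    using R c by (auto simp: is_subring_def intro!: image_eqI[where x=1])
  have add: "c * x * inverse c + c * y * inverse c \<in> (\<lambda>r. c * r * inverse c) ` R"
    if "x \<in> R" "y \<in> R" for x y
    using R that by (auto simp: is_subring_def algebra_simps intro!: image_eqI[where x="x+y"])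
  have mul: "c * x * inverse c * (c * y * inverse c) \<in> (\<lambda>r. c * r * inverse c) ` R"
    if "x \<in> R" "y \<in> R" for x y
  proof -
    have "c * x * inverse c * (c * y * inverse c) = c * x * (inverse c * c) * y * inverse c"
      by (simp add: mult.assoc)
    also have "\<dots> = c * (x * y) * inverse c" using c by (simp add: mult.assoc)
    finally have "c * x * inverse c * (c * y * inverse c) = c * (x * y) * inverse c" .
    then show ?thesis using R that by (auto simp: is_subring_def)
  qed
  have neg: "- (c * x * inverse c) \<in> (\<lambda>r. c * r * inverse c) ` R" if "x \<in> R" for x
    using R that by (auto simp: is_subring_def intro!: image_eqI[where x="-x"])
  show ?thesis unfolding is_subring_def using 0 1 add mul neg by blast
qed

lemma conj_proper:
  fixes R :: "'a::division_ring set" and c :: 'a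
  assumes c: "c \<noteq> 0" and R: "R \<noteq> UNIV"
  shows "(\<lambda>r. c * r * inverse c) ` R \<noteq> UNIV"
proof
  assume h: "(\<lambda>r. c * r * inverse c) ` R = UNIV"
  have "x \<in> R" for x
  proof -
    have "c * x * inverse c \<in> (\<lambda>r. c * r * inverse c) ` R" using h by simp
    then obtain r where r: "r \<in> R" "c * x * inverse c = c * r * inverse c" by auto
    then have "inverse c * (c * x * inverse c) * c = inverse c * (c * r * inverse c) * c" by simp
    then have "x = r" using c by (simp add: mult.assoc)
    then show ?thesis using r by simp
  qed
  then show False using R by auto
qed

lemma key:
  fixes R :: "'a::division_ring set" and c :: 'a
  assumes c: "c \<noteq> 0" and M: "maximal_subring R"
    and sub: "\<And>r. r \<in> R \<Longrightarrow> r \<in> (\<lambda>r. c * r * inverse c) ` R"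
  shows "\<And>r. r \<in> R \<Longrightarrow> c * r * inverse c \<in> R"
proof -
  have "(\<lambda>r. c * r * inverse c) ` R = R"
    using M conj_subring[OF c] conj_proper[OF c] sub unfolding maximal_subring_def
    by (metis subsetI)
  then show "\<And>r. r \<in> R \<Longrightarrow> c * r * inverse c \<in> R" by auto
qed

theorem lemma2p1:
  fixes R :: "'a::division_ring set" and l :: 'a
  assumes "maximal_subring R"
  shows "(((*) l) ` R \<subseteq> (\<lambda>r. r * l) ` R \<longleftrightarrow> (\<lambda>r. r * l) ` R \<subseteq> ((*) l) ` R) \<and>
         ((\<lambda>r. r * l) ` R \<subseteq> ((*) l) ` R \<longleftrightarrow> ((*) l) ` R = (\<lambda>r. r * l) ` R)"
proof (cases "l = 0")
  case True
  have "R \<noteq> {}" using assms unfolding maximal_subring_def is_subring_def by auto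
  then show ?thesis using True by auto
next
  case l: False
  have A: "(\<lambda>r. r * l) ` R \<subseteq> ((*) l) ` R" if h: "((*) l) ` R \<subseteq> (\<lambda>r. r * l) ` R"
  proof -
    have "r \<in> (\<lambda>r. inverse l * r * inverse (inverse l)) ` R" if r: "r \<in> R" for r
    proof -
      obtain r' where r': "r' \<in> R" "l * r = r' * l" using h r by blast
      have "r = inverse l * (l * r)" using l by (simp add: mult.assoc[symmetric])
      also have "\<dots> = inverse l * r' * inverse (inverse l)" using r' by (simp add: mult.assoc)
      finally show ?thesis using r' by blast
    qed
    then have k: "\<And>r. r \<in> R \<Longrightarrow> inverse l * r * l \<in> R"
      using key[of "inverse l" R] l assms by simp
    show ?thesis
    proof
      fix x assume "x \<in> (\<lambda>r. r * l) ` R"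
      then obtain r where r: "r \<in> R" "x = r * l" by auto
      have "r * l = l * (inverse l * r * l)" using l by (simp add: mult.assoc[symmetric])
      then show "x \<in> ((*) l) ` R" using k[OF r(1)] r by blast
    qed
  qed
  have B: "((*) l) ` R \<subseteq> (\<lambda>r. r * l) ` R" if h: "(\<lambda>r. r * l) ` R \<subseteq> ((*) l) ` R"
  proof -
    have "r \<in> (\<lambda>r. l * r * inverse l) ` R" if r: "r \<in> R" for r
    proof -
      obtain r' where r': "r' \<in> R" "r * l = l * r'" using h r by blast
      have "r = (r * l) * inverse l" using l by (simp add: mult.assoc)
      also have "\<dots> = l * r' * inverse l" using r' by simp
      finally show ?thesis using r' by blast
    qed
    then have k: "\<And>r. r \<in> R \<Longrightarrow> l * r * inverse l \<in> R"
      using key[of l R] l assms by simp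
    show ?thesis
    proof
      fix x assume "x \<in> ((*) l) ` R"
      then obtain r where r: "r \<in> R" "x = l * r" by auto
      have "l * r = (l * r * inverse l) * l" using l by (simp add: mult.assoc)
      then show "x \<in> (\<lambda>r. r * l) ` R" using k[OF r(1)] r by blast
    qed
  qed
  show ?thesis using A B by blast
qed

end
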